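(* Fix $L,V,W,K>0$, $\pi\in(0,1)$, $k_0\in[0,K]$, and let $\bar g=\min\{\phi_1,\pi C,\phi_2\}$ with $\phi_1=\frac{k_0}{k_1}\pi C$, $\phi_2=\frac{K-k_0}{K-k_2}\pi C$, where $k_1\in[\pi\bar K,\bar K]$ and $k_2\in[\bar K,K-\pi\frac CW]$ are as in the context (depending on the cycle length $T$). Then: (1) If $k_0\in[0,\pi\bar K)$, then $\bar g=\phi_1$, which decreases in $k_1$ and is independent of $k_2$; the global maximum of $\bar g$ is $Vk_0$, attained when $T=\frac1{j_1}\frac LV$ (positive integer $j_1$), and the global minimum is $\pi Vk_0$, attained when $T\ge\frac1\pi\frac LV$. (2) If $k_0\in[\pi\bar K,\bar K)$, then $\bar g=\min\{\phi_1,\pi C\}$, which is constant for $k_1\in[\pi\bar K,k_0]$, decreasing for $k_1\in(k_0,\bar K]$, and independent of $k_2$; the global maximum is $\pi C$, and the global minimum is $\pi Vk_0$, attained when $T\ge\frac1\pi\frac LV$. (3) If $k_0=\bar K$, then $\bar g=\pi C$ for all $k_1,k_2$. (4) If $k_0\in(\bar K,K-\pi\frac CW]$, then $\bar g=\min\{\phi_2,\pi C\}$, which is increasing for $k_2\in[\bar K,k_0)$, constant for $k_2\in[k_0,K-\pi\frac CW]$, and independent of $k_1$; the global maximum is $\pi C$, and the global minimum is $\pi(K-k_0)W$, attained when $T\ge\frac1\pi\frac LW$. (5) If $k_0\in(K-\pi\frac CW,K]$, then $\bar g=\phi_2$, which increases in $k_2$ and is independent of $k_1$; the global maximum is $(K-k_0)W$,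 attained when $T=\frac1{j_2}\frac LW$ (positive integer $j_2$), and the global minimum is $\pi(K-k_0)W$, attained when $T\ge\frac1\pi\frac LW$.
   Context: $\bar K=\frac{W}{V+W}K$, $C=V\bar K$. For cycle length $T>0$: $\frac LV=(j_1+\alpha_1)T$, $j_1=\lfloor L/(VT)\rfloor$, $0\le\alpha_1<1$; $\frac LW=(j_2+\alpha_2)T$, $j_2=\lfloor L/(WT)\rfloor$, $0\le\alpha_2<1$; $k_1=\frac{j_1+\min\{\alpha_1/\pi,1\}}{j_1+\alpha_1}\pi\bar K$, $k_2=K-\frac{j_2+\min\{\alpha_2/\pi,1\}}{j_2+\alpha_2}\pi\frac CW$. Here $\bar g$ is the average flow-rate in stationary states (periodic with period $T$) of a ring road of length $L$ with LWR traffic, triangular fundamental diagram $\min\{Vk,(K-k)W\}$, average density $k_0$, and a pretimed signal with cycle length $T$ and effective green ratio $\pi$. *)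

theory Defs
  imports Complex_Main
begin

text \<open>Parameters: L (ring length), V (free-flow speed), W (backward wave speed),
  K (jam density), p (effective green ratio, the paper's pi), k0 (average density),
  T (cycle length).\<close>

definition Kbar :: "real \<Rightarrow> real \<Rightarrow> real \<Rightarrow> real" where
  "Kbar V W K = W / (V + W) * K"

definition Cap :: "real \<Rightarrow> real \<Rightarrow> real \<Rightarrow> real" where
  "Cap V W K = V * Kbar V W K"

definition k1T :: "real \<Rightarrow> real \<Rightarrow> real \<Rightarrow> real \<Rightarrow> real \<Rightarrow> real \<Rightarrow> real" where
  "k1T L V W K p T =
     (let x = L / (V * T); j1 = real_of_int \<lfloor>x\<rfloor>; a1 = x - j1
      in (j1 + min (a1 / p) 1) / (j1 + a1) * p * Kbar V W K)"

definition k2T :: "real \<Rightarrow> real \<Rightarrow> real \<Rightarrow> real \<Rightarrow> real \<Rightarrow> real \<Rightarrow> real" where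
  "k2T L V W K p T =
     (let x = L / (W * T); j2 = real_of_int \<lfloor>x\<rfloor>; a2 = x - j2
      in K - (j2 + min (a2 / p) 1) / (j2 + a2) * p * (Cap V W K / W))"

definition phi1 :: "real \<Rightarrow> real \<Rightarrow> real \<Rightarrow> real \<Rightarrow> real \<Rightarrow> real \<Rightarrow> real" where
  "phi1 V W K p k0 k1 = k0 / k1 * p * Cap V W K"

definition phi2 :: "real \<Rightarrow> real \<Rightarrow> real \<Rightarrow> real \<Rightarrow> real \<Rightarrow> real \<Rightarrow> real" where
  "phi2 V W K p k0 k2 = (K - k0) / (K - k2) * p * Cap V W K"

text \<open>average flow as a function of (k1, k2)\<close>
definition gfun :: "real \<Rightarrow> real \<Rightarrow> real \<Rightarrow> real \<Rightarrow> real \<Rightarrow> real \<Rightarrow> real \<Rightarrow> real" where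
  "gfun V W K p k0 k1 k2 =
     min (phi1 V W K p k0 k1) (min (p * Cap V W K) (phi2 V W K p k0 k2))"

definition gbar :: "real \<Rightarrow> real \<Rightarrow> real \<Rightarrow> real \<Rightarrow> real \<Rightarrow> real \<Rightarrow> real \<Rightarrow> real" where
  "gbar L V W K p k0 T = gfun V W K p k0 (k1T L V W K p T) (k2T L V W K p T)"

end

theory Submission
  imports Defs
begin

definition rr :: "real \<Rightarrow> real \<Rightarrow> real" where
  "rr p x = (real_of_int \<lfloor>x\<rfloor> + min ((x - real_of_int \<lfloor>x\<rfloor>) / p) 1) / x"

lemma rr_bounds:
  assumes "x > 0" "0 < p" "p < 1"
  shows "p \<le> p * rr p x" "p * rr p x \<le> 1"
proof -
  define j where "j = real_of_int \<lfloor>x\<rfloor>"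
  define a where "a = x - j"
  have a0: "0 \<le> a" "a < 1" unfolding a_def j_def by linarith+
  have ap: "a \<le> a / p" using a0 assms by (simp add: le_divide_eq) (metis less_eq_real_def mult_left_le_one_le mult.commute)
  have j0: "0 \<le> j" unfolding j_def using assms by simp
  have n1: "x \<le> j + min (a/p) 1" using ap a0 unfolding a_def by simp
  have n2: "p * (j + min (a/p) 1) \<le> x"
  proof -
    have "p * (j + min (a/p) 1) \<le> p * j + p * (a / p)"
    proof -
      have "min (a/p) 1 \<le> a/p" by simp
      hence "p * min (a/p) 1 \<le> p * (a/p)" using assms by (intro mult_left_mono) auto
      thus ?thesis by (simp add: distrib_left)
    qed
    also have "\<dots> = p * j + a" using assms by simp
    also have "\<dots> \<le> j + a" using assms j0 by (simp add: mult_left_le_one_le)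
    finally show ?thesis unfolding a_def by simp
  qed
  have rr: "rr p x = (j + min (a/p) 1) / x" unfolding rr_def j_def a_def by simp
  show "p \<le> p * rr p x" unfolding rr using n1 assms by (simp add: le_divide_eq)
  show "p * rr p x \<le> 1" unfolding rr using n2 assms by (simp add: divide_le_eq)
qed

lemma rr_int: assumes "0 < p" "j > 0" shows "rr p (real j) = 1"
  using assms unfolding rr_def by simp

lemma rr_small: assumes "0 < p" "0 < x" "x \<le> p" "p < 1" shows "rr p x = 1 / p"
proof -
  have "\<lfloor>x\<rfloor> = 0" using assms by (simp add: floor_eq_iff)
  moreover have "x / p \<le> 1" using assms by simp
  ultimately show ?thesis unfolding rr_def using assms by (simp add: min_def)
qed

lemma k1T_eq: assumes "L>0" "V>0" "T>0"
  shows "k1T L V W K p T = rr p (L/(V*T)) * p * Kbar V W K"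
  unfolding k1T_def rr_def Let_def by simp

lemma k2T_eq: assumes "L>0" "W>0" "T>0"
  shows "k2T L V W K p T = K - rr p (L/(W*T)) * p * (Cap V W K / W)"
  unfolding k2T_def rr_def Let_def by simp

lemma fr_le: "0 < (b::real) \<Longrightarrow> 0 < c \<Longrightarrow> a \<le> b \<Longrightarrow> a / b * c \<le> c"
  by (simp add: field_simps mult_right_mono)
lemma fr_lt: "0 < (b::real) \<Longrightarrow> 0 < c \<Longrightarrow> a < b \<Longrightarrow> a / b * c < c"
  by (simp add: field_simps mult_strict_right_mono)
lemma fr_ge: "0 < (b::real) \<Longrightarrow> 0 < c \<Longrightarrow> b \<le> a \<Longrightarrow> c \<le> a / b * c"
  by (simp add: field_simps mult_right_mono)
lemma fr_mono: "0 \<le> (a::real) \<Longrightarrow> 0 < c \<Longrightarrow> 0 < x \<Longrightarrow> x \<le> y \<Longrightarrow> a / y * c \<le> a / x * c"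
  by (intro mult_right_mono divide_left_mono) auto
lemma fr_smono: "0 < (a::real) \<Longrightarrow> 0 < c \<Longrightarrow> 0 < x \<Longrightarrow> x < y \<Longrightarrow> a / y * c < a / x * c"
  by (intro mult_strict_right_mono divide_strict_left_mono) auto

theorem lemma3p5:
  fixes L V W K p k0 :: real
  defines "Kb \<equiv> Kbar V W K" and "C \<equiv> Cap V W K"
  defines "I1 \<equiv> {p * Kb .. Kb}" and "I2 \<equiv> {Kb .. K - p * C / W}"
  assumes "L > 0" and "V > 0" and "W > 0" and "K > 0"
    and "0 < p" and "p < 1"
    and "0 \<le> k0" and "k0 \<le> K"
  shows
  "(k0 < p * Kb \<longrightarrow>
      (\<forall>k1\<in>I1. \<forall>k2\<in>I2. gfun V W K p k0 k1 k2 = phi1 V W K p k0 k1)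
    \<and> (\<forall>x\<in>I1. \<forall>y\<in>I1. x \<le> y \<longrightarrow> phi1 V W K p k0 y \<le> phi1 V W K p k0 x)
    \<and> (\<forall>T>0. gbar L V W K p k0 T \<le> V * k0)
    \<and> (\<forall>j::nat. j > 0 \<longrightarrow> gbar L V W K p k0 (L / V / real j) = V * k0)
    \<and> (\<forall>T>0. p * V * k0 \<le> gbar L V W K p k0 T)
    \<and> (\<forall>T. T \<ge> L / (p * V) \<longrightarrow> gbar L V W K p k0 T = p * V * k0))
  \<and>
   (p * Kb \<le> k0 \<and> k0 < Kb \<longrightarrow>
      (\<forall>k1\<in>I1. \<forall>k2\<in>I2. gfun V W K p k0 k1 k2 = min (phi1 V W K p k0 k1) (p * C))
    \<and> (\<forall>x\<in>{p * Kb .. k0}. \<forall>y\<in>{p * Kb .. k0}.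
          min (phi1 V W K p k0 x) (p * C) = min (phi1 V W K p k0 y) (p * C))
    \<and> (\<forall>x\<in>{k0<..Kb}. \<forall>y\<in>{k0<..Kb}. x < y \<longrightarrow>
          min (phi1 V W K p k0 y) (p * C) < min (phi1 V W K p k0 x) (p * C))
    \<and> (\<forall>T>0. gbar L V W K p k0 T \<le> p * C)
    \<and> (\<exists>T>0. gbar L V W K p k0 T = p * C)
    \<and> (\<forall>T>0. p * V * k0 \<le> gbar L V W K p k0 T)
    \<and> (\<forall>T. T \<ge> L / (p * V) \<longrightarrow> gbar L V W K p k0 T = p * V * k0))
  \<and>
   (k0 = Kb \<longrightarrow>
      (\<forall>k1\<in>I1. \<forall>k2\<in>I2. gfun V W K p k0 k1 k2 = p * C)
    \<and> (\<forall>T>0. gbar L V W K p k0 T = p * C))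
  \<and>
   (Kb < k0 \<and> k0 \<le> K - p * C / W \<longrightarrow>
      (\<forall>k1\<in>I1. \<forall>k2\<in>I2. gfun V W K p k0 k1 k2 = min (phi2 V W K p k0 k2) (p * C))
    \<and> (\<forall>x\<in>{Kb ..< k0}. \<forall>y\<in>{Kb ..< k0}. x < y \<longrightarrow>
          min (phi2 V W K p k0 x) (p * C) < min (phi2 V W K p k0 y) (p * C))
    \<and> (\<forall>x\<in>{k0 .. K - p * C / W}. \<forall>y\<in>{k0 .. K - p * C / W}.
          min (phi2 V W K p k0 x) (p * C) = min (phi2 V W K p k0 y) (p * C))
    \<and> (\<forall>T>0. gbar L V W K p k0 T \<le> p * C)
    \<and> (\<exists>T>0. gbar L V W K p k0 T = p * C)
    \<and> (\<forall>T>0. p * (K - k0) * W \<le> gbar L V W K p k0 T)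
    \<and> (\<forall>T. T \<ge> L / (p * W) \<longrightarrow> gbar L V W K p k0 T = p * (K - k0) * W))
  \<and>
   (K - p * C / W < k0 \<longrightarrow>
      (\<forall>k1\<in>I1. \<forall>k2\<in>I2. gfun V W K p k0 k1 k2 = phi2 V W K p k0 k2)
    \<and> (\<forall>x\<in>I2. \<forall>y\<in>I2. x \<le> y \<longrightarrow> phi2 V W K p k0 x \<le> phi2 V W K p k0 y)
    \<and> (\<forall>T>0. gbar L V W K p k0 T \<le> (K - k0) * W)
    \<and> (\<forall>j::nat. j > 0 \<longrightarrow> gbar L V W K p k0 (L / W / real j) = (K - k0) * W)
    \<and> (\<forall>T>0. p * (K - k0) * W \<le> gbar L V W K p k0 T)
    \<and> (\<forall>T. T \<ge> L / (p * W) \<longrightarrow> gbar L V W K p k0 T = p * (K - k0) * W))"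
proof -
  note A = assms(5-12)
  have Kb0: "Kb > 0" unfolding Kb_def Kbar_def using A by simp
  have C_eq: "C = V * Kb" unfolding C_def Cap_def Kb_def by simp
  have C0: "C > 0" using C_eq Kb0 A by simp
  have pC0: "p * C > 0" using C0 A by simp
  have CW: "K - Kb = C / W"
  proof -
    have VW: "V + W > 0" using A by simp
    have "K - Kb = V / (V + W) * K" unfolding Kb_def Kbar_def using VW by (simp add: field_simps)
    also have "\<dots> = C / W" unfolding C_eq Kb_def Kbar_def using VW A by simp
    finally show ?thesis .
  qed
  have CW0: "C / W > 0" using C0 A by simp
  have pCW: "p * C / W < C / W"
  proof -
    have "p * (C / W) < 1 * (C / W)" using CW0 A by (intro mult_strict_right_mono) auto
    thus ?thesis by simp
  qed
  have pCW0: "p * C / W > 0" using pC0 A by simp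
  have pKb: "p * Kb < Kb" using Kb0 A by simp
  have pKb0: "p * Kb > 0" using Kb0 A by simp
  have gf: "\<And>k1 k2. gfun V W K p k0 k1 k2 = min (k0 / k1 * (p * C)) (min (p * C) ((K - k0) / (K - k2) * (p * C)))"
    unfolding gfun_def phi1_def phi2_def C_def by (simp add: mult.assoc)
  have ph1: "\<And>k1. phi1 V W K p k0 k1 = k0 / k1 * (p * C)"
    unfolding phi1_def C_def by (simp add: mult.assoc)
  have ph2: "\<And>k2. phi2 V W K p k0 k2 = (K - k0) / (K - k2) * (p * C)"
    unfolding phi2_def C_def by (simp add: mult.assoc)
  have gb: "\<And>T. gbar L V W K p k0 T = gfun V W K p k0 (k1T L V W K p T) (k2T L V W K p T)"
    unfolding gbar_def by simp
  have k1I: "k1T L V W K p T \<in> I1" if "T > 0" for T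
  proof -
    have x0: "L / (V * T) > 0" using A that by simp
    have e: "k1T L V W K p T = (p * rr p (L / (V * T))) * Kb"
      using k1T_eq[of L V T W K p] A that unfolding Kb_def by simp
    show ?thesis unfolding I1_def e using rr_bounds[OF x0 A(5,6)] Kb0
      by (auto intro: mult_right_mono simp: mult_left_le_one_le)
  qed
  have k2I: "k2T L V W K p T \<in> I2" if "T > 0" for T
  proof -
    have x0: "L / (W * T) > 0" using A that by simp
    have e: "k2T L V W K p T = K - (p * rr p (L / (W * T))) * (C / W)"
      using k2T_eq[of L W T V K p] A that unfolding C_def by simp
    have b1: "p * (C / W) \<le> (p * rr p (L / (W * T))) * (C / W)"
      using rr_bounds(1)[OF x0 A(5,6)] CW0 by (intro mult_right_mono) auto
    have b2: "(p * rr p (L / (W * T))) * (C / W) \<le> C / W"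
      using rr_bounds(2)[OF x0 A(5,6)] CW0 mult_right_mono[of "p * rr p (L / (W * T))" 1 "C/W"] by simp
    show ?thesis unfolding I2_def e using b1 b2 CW by auto
  qed
  have k1j: "k1T L V W K p (L / V / real j) = p * Kb" if "j > 0" for j :: nat
  proof -
    have T0: "L / V / real j > 0" using A that by simp
    have "L / (V * (L / V / real j)) = real j" using A that by (simp add: field_simps)
    thus ?thesis using k1T_eq[OF A(1,2) T0, of W K p] rr_int[OF A(5) that] unfolding Kb_def by simp
  qed
  have k2j: "k2T L V W K p (L / W / real j) = K - p * C / W" if "j > 0" for j :: nat
  proof -
    have T0: "L / W / real j > 0" using A that by simp
    have "L / (W * (L / W / real j)) = real j" using A that by (simp add: field_simps)
    thus ?thesis using k2T_eq[OF A(1,3) T0, of V K p] rr_int[OF A(5) that] unfolding C_def by simp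
  qed
  have k1big: "k1T L V W K p T = Kb" if "T \<ge> L / (p * V)" for T
  proof -
    have T0: "T > 0" using that A by (smt (verit) divide_pos_pos mult_pos_pos)
    have x0: "L / (V * T) > 0" using A T0 by simp
    have "L / (V * T) \<le> p" using that A T0 by (simp add: field_simps)
    hence "rr p (L / (V * T)) = 1 / p" using rr_small A x0 by simp
    thus ?thesis using k1T_eq[OF A(1,2) T0, of W K p] A unfolding Kb_def by simp
  qed
  have k2big: "k2T L V W K p T = Kb" if "T \<ge> L / (p * W)" for T
  proof -
    have T0: "T > 0" using that A by (smt (verit) divide_pos_pos mult_pos_pos)
    have x0: "L / (W * T) > 0" using A T0 by simp
    have "L / (W * T) \<le> p" using that A T0 by (simp add: field_simps)
    hence "rr p (L / (W * T)) = 1 / p" using rr_small A x0 by simp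
    thus ?thesis using k2T_eq[OF A(1,3) T0, of V K p] A CW unfolding C_def by simp
  qed
  have E1: "k0 / (p * Kb) * (p * C) = V * k0" using C_eq Kb0 A by (simp add: field_simps)
  have E2: "k0 / Kb * (p * C) = p * V * k0" using C_eq Kb0 A by (simp add: field_simps)
  have E3: "(K - k0) / (p * C / W) * (p * C) = (K - k0) * W" using C0 A by (simp add: field_simps)
  have E4: "(K - k0) / (K - Kb) * (p * C) = p * (K - k0) * W" unfolding CW using C0 A by (simp add: field_simps)
  have P1: "0 < k1 \<and> k1 \<le> Kb \<and> p * Kb \<le> k1" if "k1 \<in> I1" for k1
    using that pKb0 unfolding I1_def by auto
  have P2: "p * C / W \<le> K - k2 \<and> K - k2 \<le> C / W \<and> 0 < K - k2" if "k2 \<in> I2" for k2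
    using that pCW0 CW unfolding I2_def by auto
  have gfm: "gfun V W K p k0 k1 k2 = min (phi1 V W K p k0 k1) (min (p * C) (phi2 V W K p k0 k2))" for k1 k2
    unfolding gf ph1 ph2 by simp
  have gbT: "gbar L V W K p k0 T = min (phi1 V W K p k0 (k1T L V W K p T)) (min (p * C) (phi2 V W K p k0 (k2T L V W K p T)))" for T
    unfolding gb gfm by simp
  have T1: "L / V / real (1::nat) > 0" using A by simp
  have T2: "L / W / real (1::nat) > 0" using A by simp
  have L1le: "phi1 V W K p k0 k1 \<le> p * C" if "k1 \<in> I1" "k0 \<le> k1" for k1
    unfolding ph1 using fr_le[of k1 "p*C" k0] P1[OF that(1)] that(2) pC0 by simp
  have L1lt: "phi1 V W K p k0 k1 < p * C" if "k1 \<in> I1" "k0 < k1" for k1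
    unfolding ph1 using fr_lt[of k1 "p*C" k0] P1[OF that(1)] that(2) pC0 by simp
  have L1ge: "p * C \<le> phi1 V W K p k0 k1" if "k1 \<in> I1" "k1 \<le> k0" for k1
    unfolding ph1 using fr_ge[of k1 "p*C" k0] P1[OF that(1)] that(2) pC0 by simp
  have L2le: "phi2 V W K p k0 k2 \<le> p * C" if "k2 \<in> I2" "k2 \<le> k0" for k2
    unfolding ph2 using fr_le[of "K-k2" "p*C" "K-k0"] P2[OF that(1)] that(2) pC0 by simp
  have L2lt: "phi2 V W K p k0 k2 < p * C" if "k2 \<in> I2" "k2 < k0" for k2
    unfolding ph2 using fr_lt[of "K-k2" "p*C" "K-k0"] P2[OF that(1)] that(2) pC0 by simp
  have L2ge: "p * C \<le> phi2 V W K p k0 k2" if "k2 \<in> I2" "k0 \<le> k2" for k2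
    unfolding ph2 using fr_ge[of "K-k2" "p*C" "K-k0"] P2[OF that(1)] that(2) pC0 by simp
  have M1: "phi1 V W K p k0 y \<le> phi1 V W K p k0 x" if "0 < x" "x \<le> y" for x y
    unfolding ph1 using fr_mono[of k0 "p*C" x y] that A pC0 by simp
  have M1s: "phi1 V W K p k0 y < phi1 V W K p k0 x" if "0 < k0" "0 < x" "x < y" for x y
    unfolding ph1 using fr_smono[of k0 "p*C" x y] that pC0 by simp
  have M2: "phi2 V W K p k0 x \<le> phi2 V W K p k0 y" if "0 < K - y" "x \<le> y" for x y
    unfolding ph2 using fr_mono[of "K-k0" "p*C" "K-y" "K-x"] that A pC0 by simp
  have M2s: "phi2 V W K p k0 x < phi2 V W K p k0 y" if "0 < K - k0" "0 < K - y" "x < y" for x y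
    unfolding ph2 using fr_smono[of "K-k0" "p*C" "K-y" "K-x"] that pC0 by simp
  have V1: "phi1 V W K p k0 (p * Kb) = V * k0" unfolding ph1 using E1 by simp
  have V2: "phi1 V W K p k0 Kb = p * V * k0" unfolding ph1 using E2 by simp
  have V3: "phi2 V W K p k0 (K - p * C / W) = (K - k0) * W" unfolding ph2 using E3 by simp
  have V4: "phi2 V W K p k0 Kb = p * (K - k0) * W" unfolding ph2 using E4 by simp
  have pKbI: "p * Kb \<in> I1" and KbI: "Kb \<in> I1" unfolding I1_def using pKb by auto
  have KbI2: "Kb \<in> I2" and tI2: "K - p * C / W \<in> I2" unfolding I2_def using pCW CW by auto
  have c1: "k0 < p * Kb \<longrightarrow> (\<forall>k1\<in>I1. \<forall>k2\<in>I2. gfun V W K p k0 k1 k2 = phi1 V W K p k0 k1) \<and> (\<forall>x\<in>I1. \<forall>y\<in>I1. x \<le> y \<longrightarrow> phi1 V W K p k0 y \<le> phi1 V W K p k0 x) \<and> (\<forall>T>0. gbar L V W K p k0 T \<le> V * k0) \<and> (\<forall>j::nat. j > 0 \<longrightarrow> gbar L V W K p k0 (L / V / real j) = V * k0) \<and> (\<forall>T>0. p * V * k0 \<le> gbar L V W K p k0 T) \<and> (\<forall>T. T \<ge> L / (p * V) \<longrightarrow> gbar L V W K p k0 T = p * V * k0)"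
  proof (rule impI)
    assume h: "k0 < p * Kb"
    have q1: "(\<forall>k1\<in>I1. \<forall>k2\<in>I2. gfun V W K p k0 k1 k2 = phi1 V W K p k0 k1)"
    proof (intro ballI)
      fix k1 k2 assume a: "k1 \<in> I1" "k2 \<in> I2"
      have "k0 \<le> k1" using P1[OF a(1)] h by simp
      hence "phi1 V W K p k0 k1 \<le> p * C" using L1le a by simp
      moreover have "p * C \<le> phi2 V W K p k0 k2" using L2ge a h pKb unfolding I2_def by simp
      ultimately show "gfun V W K p k0 k1 k2 = phi1 V W K p k0 k1" unfolding gfm by (simp add: min_def)
    qed
    have q2: "(\<forall>x\<in>I1. \<forall>y\<in>I1. x \<le> y \<longrightarrow> phi1 V W K p k0 y \<le> phi1 V W K p k0 x)"
    using M1 pKb0 unfolding I1_def by auto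
    have q3: "(\<forall>T>0. gbar L V W K p k0 T \<le> V * k0)"
    proof (intro allI impI)
    fix T :: real assume T: "T > 0"
    have "gbar L V W K p k0 T = phi1 V W K p k0 (k1T L V W K p T)" using q1 k1I[OF T] k2I[OF T] gb by simp
    also have "\<dots> \<le> phi1 V W K p k0 (p * Kb)" using M1 pKb0 P1[OF k1I[OF T]] by simp
    finally show "gbar L V W K p k0 T \<le> V * k0" using V1 by simp
  qed
    have q4: "(\<forall>j::nat. j > 0 \<longrightarrow> gbar L V W K p k0 (L / V / real j) = V * k0)"
    proof (intro allI impI)
    fix j :: nat assume j: "j > 0"
    have T: "L / V / real j > 0" using A j by simp
    show "gbar L V W K p k0 (L / V / real j) = V * k0" using q1 k1I[OF T] k2I[OF T] gb k1j[OF j] V1 by simp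
  qed
    have q5: "(\<forall>T>0. p * V * k0 \<le> gbar L V W K p k0 T)"
    proof (intro allI impI)
    fix T :: real assume T: "T > 0"
    have "gbar L V W K p k0 T = phi1 V W K p k0 (k1T L V W K p T)" using q1 k1I[OF T] k2I[OF T] gb by simp
    moreover have "phi1 V W K p k0 Kb \<le> phi1 V W K p k0 (k1T L V W K p T)" using M1 P1[OF k1I[OF T]] by simp
    ultimately show "p * V * k0 \<le> gbar L V W K p k0 T" using V2 by simp
  qed
    have q6: "(\<forall>T. T \<ge> L / (p * V) \<longrightarrow> gbar L V W K p k0 T = p * V * k0)"
    proof (intro allI impI)
    fix T :: real assume T: "T \<ge> L / (p * V)"
    have T0: "T > 0" using T A by (smt (verit) divide_pos_pos mult_pos_pos)
    show "gbar L V W K p k0 T = p * V * k0" using q1 k1I[OF T0] k2I[OF T0] gb k1big[OF T] V2 by simp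
  qed
    show "(\<forall>k1\<in>I1. \<forall>k2\<in>I2. gfun V W K p k0 k1 k2 = phi1 V W K p k0 k1) \<and> (\<forall>x\<in>I1. \<forall>y\<in>I1. x \<le> y \<longrightarrow> phi1 V W K p k0 y \<le> phi1 V W K p k0 x) \<and> (\<forall>T>0. gbar L V W K p k0 T \<le> V * k0) \<and> (\<forall>j::nat. j > 0 \<longrightarrow> gbar L V W K p k0 (L / V / real j) = V * k0) \<and> (\<forall>T>0. p * V * k0 \<le> gbar L V W K p k0 T) \<and> (\<forall>T. T \<ge> L / (p * V) \<longrightarrow> gbar L V W K p k0 T = p * V * k0)" using q1 q2 q3 q4 q5 q6 by (intro conjI) assumption+
  qed
  have c2: "p * Kb \<le> k0 \<and> k0 < Kb \<longrightarrow> (\<forall>k1\<in>I1. \<forall>k2\<in>I2. gfun V W K p k0 k1 k2 = min (phi1 V W K p k0 k1) (p * C)) \<and> (\<forall>x\<in>{p * Kb .. k0}. \<forall>y\<in>{p * Kb .. k0}. min (phi1 V W K p k0 x) (p * C) = min (phi1 V W K p k0 y) (p * C)) \<and> (\<forall>x\<in>{k0<..Kb}. \<forall>y\<in>{k0<..Kb}. x < y \<longrightarrow> min (phi1 V W K p k0 y) (p * C) < min (phi1 V W K p k0 x) (p * C)) \<and> (\<forall>T>0. gbar L V W K p k0 T \<le> p * C) \<and> (\<exists>T>0. gbar L V W K p k0 T = p * C) \<and> (\<forall>T>0. p * V * k0 \<le> gbar L V W K p k0 T) \<and> (\<forall>T. T \<ge> L / (p * V) \<longrightarrow> gbar L V W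 K p k0 T = p * V * k0)"
  proof (rule impI)
    assume h: "p * Kb \<le> k0 \<and> k0 < Kb"
    have q1: "(\<forall>k1\<in>I1. \<forall>k2\<in>I2. gfun V W K p k0 k1 k2 = min (phi1 V W K p k0 k1) (p * C))"
    using L2ge h unfolding I2_def gfm by (auto simp: min_def)
    have q2: "(\<forall>x\<in>{p * Kb .. k0}. \<forall>y\<in>{p * Kb .. k0}. min (phi1 V W K p k0 x) (p * C) = min (phi1 V W K p k0 y) (p * C))"
    proof (intro ballI)
      fix x y assume x: "x \<in> {p * Kb .. k0}" and y: "y \<in> {p * Kb .. k0}"
      have xI: "x \<in> I1" and yI: "y \<in> I1" using x y h unfolding I1_def by auto
      have "p * C \<le> phi1 V W K p k0 x" "p * C \<le> phi1 V W K p k0 y" using L1ge[OF xI] L1ge[OF yI] x y by auto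
      thus "min (phi1 V W K p k0 x) (p * C) = min (phi1 V W K p k0 y) (p * C)" by (simp add: min_absorb2)
    qed
    have q3: "(\<forall>x\<in>{k0<..Kb}. \<forall>y\<in>{k0<..Kb}. x < y \<longrightarrow> min (phi1 V W K p k0 y) (p * C) < min (phi1 V W K p k0 x) (p * C))"
    proof (intro ballI impI)
    fix x y assume x: "x \<in> {k0<..Kb}" and y: "y \<in> {k0<..Kb}" and xy: "x < y"
    have k0p: "0 < k0" using h pKb0 by simp
    have xI: "x \<in> I1" and yI: "y \<in> I1" using x y h unfolding I1_def by auto
    show "min (phi1 V W K p k0 y) (p * C) < min (phi1 V W K p k0 x) (p * C)"
      using M1s[OF k0p _ xy] L1lt[OF xI] L1lt[OF yI] x y pKb0 h by (auto simp: min_def)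
  qed
    have q4: "(\<forall>T>0. gbar L V W K p k0 T \<le> p * C)"
    using gb q1 k1I k2I by simp
    have q5: "(\<exists>T>0. gbar L V W K p k0 T = p * C)"
    proof (intro exI conjI)
    show "L / V / real (1::nat) > 0" using T1 .
    show "gbar L V W K p k0 (L / V / real (1::nat)) = p * C"
      using q1 k1I[OF T1] k2I[OF T1] gb k1j[of 1] L1ge[OF pKbI] h by (simp add: min_def)
  qed
    have q6: "(\<forall>T>0. p * V * k0 \<le> gbar L V W K p k0 T)"
    proof (intro allI impI)
    fix T :: real assume T: "T > 0"
    have e: "gbar L V W K p k0 T = min (phi1 V W K p k0 (k1T L V W K p T)) (p * C)" using q1 k1I[OF T] k2I[OF T] gb by simp
    have "phi1 V W K p k0 Kb \<le> phi1 V W K p k0 (k1T L V W K p T)" using M1 P1[OF k1I[OF T]] by simp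
    moreover have "p * V * k0 \<le> p * C" using C_eq h A by simp
    ultimately show "p * V * k0 \<le> gbar L V W K p k0 T" using V2 e by simp
  qed
    have q7: "(\<forall>T. T \<ge> L / (p * V) \<longrightarrow> gbar L V W K p k0 T = p * V * k0)"
    proof (intro allI impI)
    fix T :: real assume T: "T \<ge> L / (p * V)"
    have T0: "T > 0" using T A by (smt (verit) divide_pos_pos mult_pos_pos)
    have "p * V * k0 \<le> p * C" using C_eq h A by simp
    thus "gbar L V W K p k0 T = p * V * k0" using q1 k1I[OF T0] k2I[OF T0] gb k1big[OF T] V2 by simp
  qed
    show "(\<forall>k1\<in>I1. \<forall>k2\<in>I2. gfun V W K p k0 k1 k2 = min (phi1 V W K p k0 k1) (p * C)) \<and> (\<forall>x\<in>{p * Kb .. k0}. \<forall>y\<in>{p * Kb .. k0}. min (phi1 V W K p k0 x) (p * C) = min (phi1 V W K p k0 y) (p * C)) \<and> (\<forall>x\<in>{k0<..Kb}. \<forall>y\<in>{k0<..Kb}. x < y \<longrightarrow> min (phi1 V W K p k0 y) (p * C) < min (phi1 V W K p k0 x) (p * C)) \<and> (\<forall>T>0. gbar L V W K p k0 T \<le> p * C) \<and> (\<exists>T>0. gbar L V W K p k0 T = p * C) \<and> (\<forall>T>0. p * V * k0 \<le> gbar L V W K p k0 T) \<and> (\<forall>T. T \<ge> L / (p * V) \<longrightarrow> gbar L V W K p k0 T = p * V * k0)" using q1 q2 q3 q4 q5 q6 q7 by (intro conjI) assumption+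
  qed
  have c3: "k0 = Kb \<longrightarrow> (\<forall>k1\<in>I1. \<forall>k2\<in>I2. gfun V W K p k0 k1 k2 = p * C) \<and> (\<forall>T>0. gbar L V W K p k0 T = p * C)"
  proof (rule impI)
    assume h: "k0 = Kb"
    have q1: "(\<forall>k1\<in>I1. \<forall>k2\<in>I2. gfun V W K p k0 k1 k2 = p * C)"
    proof (intro ballI)
      fix k1 k2 assume a: "k1 \<in> I1" "k2 \<in> I2"
      have "p * C \<le> phi1 V W K p k0 k1" using L1ge a P1[OF a(1)] h by simp
      moreover have "p * C \<le> phi2 V W K p k0 k2" using L2ge a h unfolding I2_def by simp
      ultimately show "gfun V W K p k0 k1 k2 = p * C" unfolding gfm by (simp add: min_def)
    qed
    have q2: "(\<forall>T>0. gbar L V W K p k0 T = p * C)"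
    using q1 k1I k2I gb by simp
    show "(\<forall>k1\<in>I1. \<forall>k2\<in>I2. gfun V W K p k0 k1 k2 = p * C) \<and> (\<forall>T>0. gbar L V W K p k0 T = p * C)" using q1 q2 by (intro conjI) assumption+
  qed
  have c4: "Kb < k0 \<and> k0 \<le> K - p * C / W \<longrightarrow> (\<forall>k1\<in>I1. \<forall>k2\<in>I2. gfun V W K p k0 k1 k2 = min (phi2 V W K p k0 k2) (p * C)) \<and> (\<forall>x\<in>{Kb ..< k0}. \<forall>y\<in>{Kb ..< k0}. x < y \<longrightarrow> min (phi2 V W K p k0 x) (p * C) < min (phi2 V W K p k0 y) (p * C)) \<and> (\<forall>x\<in>{k0 .. K - p * C / W}. \<forall>y\<in>{k0 .. K - p * C / W}. min (phi2 V W K p k0 x) (p * C) = min (phi2 V W K p k0 y) (p * C)) \<and> (\<forall>T>0. gbar L V W K p k0 T \<le> p * C) \<and> (\<exists>T>0. gbar L V W K p k0 T = p * C) \<and> (\<forall>T>0. p * (K - k0) * W \<le> gbar L V W K p k0 T) \<and> (\<forall>T. T \<ge> L / (p * W) \<longrightarrow> gbar L V W K p k0 T = p * (K - k0) * W)"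
  proof (rule impI)
    assume h: "Kb < k0 \<and> k0 \<le> K - p * C / W"
    have q1: "(\<forall>k1\<in>I1. \<forall>k2\<in>I2. gfun V W K p k0 k1 k2 = min (phi2 V W K p k0 k2) (p * C))"
    proof (intro ballI)
      fix k1 k2 assume a: "k1 \<in> I1" "k2 \<in> I2"
      have "p * C \<le> phi1 V W K p k0 k1" using L1ge a P1[OF a(1)] h by simp
      thus "gfun V W K p k0 k1 k2 = min (phi2 V W K p k0 k2) (p * C)" unfolding gfm by (simp add: min_def)
    qed
    have q2: "(\<forall>x\<in>{Kb ..< k0}. \<forall>y\<in>{Kb ..< k0}. x < y \<longrightarrow> min (phi2 V W K p k0 x) (p * C) < min (phi2 V W K p k0 y) (p * C))"
    proof (intro ballI impI)
    fix x y assume x: "x \<in> {Kb..<k0}" and y: "y \<in> {Kb..<k0}" and xy: "x < y"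
    have k0p: "0 < K - k0" using h pCW0 by simp
    have xI: "x \<in> I2" and yI: "y \<in> I2" using x y h unfolding I2_def by auto
    show "min (phi2 V W K p k0 x) (p * C) < min (phi2 V W K p k0 y) (p * C)"
      using M2s[OF k0p _ xy] L2lt[OF xI] L2lt[OF yI] x y h pCW0 by (auto simp: min_def)
  qed
    have q3: "(\<forall>x\<in>{k0 .. K - p * C / W}. \<forall>y\<in>{k0 .. K - p * C / W}. min (phi2 V W K p k0 x) (p * C) = min (phi2 V W K p k0 y) (p * C))"
    proof (intro ballI)
      fix x y assume x: "x \<in> {k0 .. K - p * C / W}" and y: "y \<in> {k0 .. K - p * C / W}"
      have xI: "x \<in> I2" and yI: "y \<in> I2" using x y h unfolding I2_def by auto
      have "p * C \<le> phi2 V W K p k0 x" "p * C \<le> phi2 V W K p k0 y" using L2ge[OF xI] L2ge[OF yI] x y by auto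
      thus "min (phi2 V W K p k0 x) (p * C) = min (phi2 V W K p k0 y) (p * C)" by (simp add: min_absorb2)
    qed
    have q4: "(\<forall>T>0. gbar L V W K p k0 T \<le> p * C)"
    using gb q1 k1I k2I by simp
    have q5: "(\<exists>T>0. gbar L V W K p k0 T = p * C)"
    proof (intro exI conjI)
    show "L / W / real (1::nat) > 0" using T2 .
    show "gbar L V W K p k0 (L / W / real (1::nat)) = p * C"
      using q1 k1I[OF T2] k2I[OF T2] gb k2j[of 1] L2ge[OF tI2] h by (simp add: min_def)
  qed
    have q6: "(\<forall>T>0. p * (K - k0) * W \<le> gbar L V W K p k0 T)"
    proof (intro allI impI)
    fix T :: real assume T: "T > 0"
    have e: "gbar L V W K p k0 T = min (phi2 V W K p k0 (k2T L V W K p T)) (p * C)" using q1 k1I[OF T] k2I[OF T] gb by simp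
    have "phi2 V W K p k0 Kb \<le> phi2 V W K p k0 (k2T L V W K p T)" using M2 P2[OF k2I[OF T]] k2I[OF T] unfolding I2_def by simp
    moreover have "p * (K - k0) * W \<le> p * C" using V4 L2le[OF KbI2] h by simp
    ultimately show "p * (K - k0) * W \<le> gbar L V W K p k0 T" using V4 e by simp
  qed
    have q7: "(\<forall>T. T \<ge> L / (p * W) \<longrightarrow> gbar L V W K p k0 T = p * (K - k0) * W)"
    proof (intro allI impI)
    fix T :: real assume T: "T \<ge> L / (p * W)"
    have T0: "T > 0" using T A by (smt (verit) divide_pos_pos mult_pos_pos)
    have "p * (K - k0) * W \<le> p * C" using V4 L2le[OF KbI2] h by simp
    thus "gbar L V W K p k0 T = p * (K - k0) * W" using q1 k1I[OF T0] k2I[OF T0] gb k2big[OF T] V4 by simp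
  qed
    show "(\<forall>k1\<in>I1. \<forall>k2\<in>I2. gfun V W K p k0 k1 k2 = min (phi2 V W K p k0 k2) (p * C)) \<and> (\<forall>x\<in>{Kb ..< k0}. \<forall>y\<in>{Kb ..< k0}. x < y \<longrightarrow> min (phi2 V W K p k0 x) (p * C) < min (phi2 V W K p k0 y) (p * C)) \<and> (\<forall>x\<in>{k0 .. K - p * C / W}. \<forall>y\<in>{k0 .. K - p * C / W}. min (phi2 V W K p k0 x) (p * C) = min (phi2 V W K p k0 y) (p * C)) \<and> (\<forall>T>0. gbar L V W K p k0 T \<le> p * C) \<and> (\<exists>T>0. gbar L V W K p k0 T = p * C) \<and> (\<forall>T>0. p * (K - k0) * W \<le> gbar L V W K p k0 T) \<and> (\<forall>T. T \<ge> L / (p * W) \<longrightarrow> gbar L V W K p k0 T = p * (K - k0) * W)" using q1 q2 q3 q4 q5 q6 q7 by (intro conjI) assumption+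
  qed
  have c5: "K - p * C / W < k0 \<longrightarrow> (\<forall>k1\<in>I1. \<forall>k2\<in>I2. gfun V W K p k0 k1 k2 = phi2 V W K p k0 k2) \<and> (\<forall>x\<in>I2. \<forall>y\<in>I2. x \<le> y \<longrightarrow> phi2 V W K p k0 x \<le> phi2 V W K p k0 y) \<and> (\<forall>T>0. gbar L V W K p k0 T \<le> (K - k0) * W) \<and> (\<forall>j::nat. j > 0 \<longrightarrow> gbar L V W K p k0 (L / W / real j) = (K - k0) * W) \<and> (\<forall>T>0. p * (K - k0) * W \<le> gbar L V W K p k0 T) \<and> (\<forall>T. T \<ge> L / (p * W) \<longrightarrow> gbar L V W K p k0 T = p * (K - k0) * W)"
  proof (rule impI)
    assume h: "K - p * C / W < k0"
    have q1: "(\<forall>k1\<in>I1. \<forall>k2\<in>I2. gfun V W K p k0 k1 k2 = phi2 V W K p k0 k2)"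
    proof (intro ballI)
      fix k1 k2 assume a: "k1 \<in> I1" "k2 \<in> I2"
      have "p * C \<le> phi1 V W K p k0 k1" using L1ge a P1[OF a(1)] h pCW CW by simp
      moreover have "phi2 V W K p k0 k2 \<le> p * C" using L2le a h unfolding I2_def by simp
      ultimately show "gfun V W K p k0 k1 k2 = phi2 V W K p k0 k2" unfolding gfm by (simp add: min_def)
    qed
    have q2: "(\<forall>x\<in>I2. \<forall>y\<in>I2. x \<le> y \<longrightarrow> phi2 V W K p k0 x \<le> phi2 V W K p k0 y)"
    using M2 P2 by auto
    have q3: "(\<forall>T>0. gbar L V W K p k0 T \<le> (K - k0) * W)"
    proof (intro allI impI)
    fix T :: real assume T: "T > 0"
    have "gbar L V W K p k0 T = phi2 V W K p k0 (k2T L V W K p T)" using q1 k1I[OF T] k2I[OF T] gb by simp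
    also have "\<dots> \<le> phi2 V W K p k0 (K - p * C / W)" using M2 pCW0 k2I[OF T] unfolding I2_def by simp
    finally show "gbar L V W K p k0 T \<le> (K - k0) * W" using V3 by simp
  qed
    have q4: "(\<forall>j::nat. j > 0 \<longrightarrow> gbar L V W K p k0 (L / W / real j) = (K - k0) * W)"
    proof (intro allI impI)
    fix j :: nat assume j: "j > 0"
    have T: "L / W / real j > 0" using A j by simp
    show "gbar L V W K p k0 (L / W / real j) = (K - k0) * W" using q1 k1I[OF T] k2I[OF T] gb k2j[OF j] V3 by simp
  qed
    have q5: "(\<forall>T>0. p * (K - k0) * W \<le> gbar L V W K p k0 T)"
    proof (intro allI impI)
    fix T :: real assume T: "T > 0"
    have "gbar L V W K p k0 T = phi2 V W K p k0 (k2T L V W K p T)" using q1 k1I[OF T] k2I[OF T] gb by simp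
    moreover have "phi2 V W K p k0 Kb \<le> phi2 V W K p k0 (k2T L V W K p T)" using M2 P2[OF k2I[OF T]] k2I[OF T] unfolding I2_def by simp
    ultimately show "p * (K - k0) * W \<le> gbar L V W K p k0 T" using V4 by simp
  qed
    have q6: "(\<forall>T. T \<ge> L / (p * W) \<longrightarrow> gbar L V W K p k0 T = p * (K - k0) * W)"
    proof (intro allI impI)
    fix T :: real assume T: "T \<ge> L / (p * W)"
    have T0: "T > 0" using T A by (smt (verit) divide_pos_pos mult_pos_pos)
    show "gbar L V W K p k0 T = p * (K - k0) * W" using q1 k1I[OF T0] k2I[OF T0] gb k2big[OF T] V4 by simp
  qed
    show "(\<forall>k1\<in>I1. \<forall>k2\<in>I2. gfun V W K p k0 k1 k2 = phi2 V W K p k0 k2) \<and> (\<forall>x\<in>I2. \<forall>y\<in>I2. x \<le> y \<longrightarrow> phi2 V W K p k0 x \<le> phi2 V W K p k0 y) \<and> (\<forall>T>0. gbar L V W K p k0 T \<le> (K - k0) * W) \<and> (\<forall>j::nat. j > 0 \<longrightarrow> gbar L V W K p k0 (L / W / real j) = (K - k0) * W) \<and> (\<forall>T>0. p * (K - k0) * W \<le> gbar L V W K p k0 T) \<and> (\<forall>T. T \<ge> L / (p * W) \<longrightarrow> gbar L V W K p k0 T = p * (K - k0) * W)" using q1 q2 q3 q4 q5 q6 by (intro conjI) assumption+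
  qed
  show ?thesis using c1 c2 c3 c4 c5 by (intro conjI) assumption+
qed

end
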